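(* Let $\mathbb F$ be a field and $G,F_1,\dots,F_m\in\mathbb F[x_1,\dots,x_n]$. If there is an RIPS-certificate that $G$ is in the radical of the ideal generated by $F_1,\dots,F_m$, then $G$ is in fact in $\sqrt{\langle F_1,\dots,F_m\rangle}$.
   Context: An RIPS (rational Ideal Proof System) certificate that $G$ is in the radical of the $\overline{\mathbb F}[\vec x]$-ideal generated by $F_1,\dots,F_m$ is a rational function $C(\vec x,\vec y)$ in $\vec x$ and placeholder variables $y_1,\dots,y_m$ such that: (0) writing $C=C'/D$ with $C',D$ relatively prime polynomials, $1/D(\vec x,F_1(\vec x),\dots,F_m(\vec x))$ lies in the localization of the polynomial ring at the union of the prime ideals minimal over $\langle F_1,\dots,F_m\rangle$ — equivalently, if $G$ is an invertible constant then $D$ is an invertible constant, and otherwise $D(\vec x,\vec F(\vec x))$ does not vanish identically on any irreducible component (over $\overline{\mathbb F}$) of the algebraic set $V(F_1,\dots,F_m)\subseteq\overline{\mathbb F}^n$; (1) $C(\vec x,\vec0)=0$; (2) $C(\vec x,F_1(\vec x),\dots,F_m(\vec x))=G(\vec x)$. *)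

theory Defs
  imports "HOL-Library.Poly_Mapping" "HOL-Algebra.Algebraic_Closure_Type"
begin

type_synonym ('v, 'a) mpoly = "('v \<Rightarrow>\<^sub>0 nat) \<Rightarrow>\<^sub>0 'a"

definition vars :: "('v, 'a::zero) mpoly \<Rightarrow> 'v set" where
  "vars p = \<Union> (Poly_Mapping.keys ` Poly_Mapping.keys p)"

definition polys_in :: "'v set \<Rightarrow> ('v, 'a::zero) mpoly set" where
  "polys_in V = {p. vars p \<subseteq> V}"

definition Var :: "'v \<Rightarrow> ('v, 'a::{zero,one}) mpoly" where
  "Var v = Poly_Mapping.single (Poly_Mapping.single v 1) 1"

definition Const :: "'a::zero \<Rightarrow> ('v, 'a) mpoly" where
  "Const c = Poly_Mapping.single 0 c"

definition subst :: "('v \<Rightarrow> ('w, 'a::comm_ring_1) mpoly) \<Rightarrow> ('v, 'a) mpoly \<Rightarrow> ('w, 'a) mpoly" where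
  "subst \<sigma> p = (\<Sum>mon\<in>Poly_Mapping.keys p. Const (Poly_Mapping.lookup p mon) * (\<Prod>v\<in>Poly_Mapping.keys mon. \<sigma> v ^ Poly_Mapping.lookup mon v))"

definition map_coeffs :: "('a::zero \<Rightarrow> 'b::zero) \<Rightarrow> ('v, 'a) mpoly \<Rightarrow> ('v, 'b) mpoly" where
  "map_coeffs f p = Poly_Mapping.map f p"

text \<open>Ideals inside the subring R (intended: R = polynomials in x_0..x_{n-1}).\<close>
definition ideal_gen :: "('v, 'a::comm_ring_1) mpoly set \<Rightarrow> (nat \<Rightarrow> ('v, 'a) mpoly) \<Rightarrow> nat \<Rightarrow> ('v, 'a) mpoly set" where
  "ideal_gen R Fs m = {\<Sum>i<m. h i * Fs i | h. \<forall>i<m. h i \<in> R}"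

definition in_radical :: "('v, 'a::comm_ring_1) mpoly set \<Rightarrow> (nat \<Rightarrow> ('v, 'a) mpoly) \<Rightarrow> nat \<Rightarrow> ('v, 'a) mpoly \<Rightarrow> bool" where
  "in_radical R Fs m G \<longleftrightarrow> (\<exists>k. G ^ k \<in> ideal_gen R Fs m)"

definition is_ideal_in :: "'r::comm_ring_1 set \<Rightarrow> 'r set \<Rightarrow> bool" where
  "is_ideal_in R I \<longleftrightarrow> I \<subseteq> R \<and> 0 \<in> I \<and> (\<forall>a\<in>I. \<forall>b\<in>I. a + b \<in> I) \<and> (\<forall>r\<in>R. \<forall>a\<in>I. r * a \<in> I)"

definition prime_ideal_in :: "'r::comm_ring_1 set \<Rightarrow> 'r set \<Rightarrow> bool" where
  "prime_ideal_in R P \<longleftrightarrow> is_ideal_in R P \<and> 1 \<notin> P \<and>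
     (\<forall>a\<in>R. \<forall>b\<in>R. a * b \<in> P \<longrightarrow> a \<in> P \<or> b \<in> P)"

definition minimal_prime_over :: "'r::comm_ring_1 set \<Rightarrow> 'r set \<Rightarrow> 'r set \<Rightarrow> bool" where
  "minimal_prime_over R I P \<longleftrightarrow> prime_ideal_in R P \<and> I \<subseteq> P \<and>
     (\<forall>Q. prime_ideal_in R Q \<and> I \<subseteq> Q \<and> Q \<subseteq> P \<longrightarrow> Q = P)"

definition rel_prime :: "'r::comm_semiring_1 \<Rightarrow> 'r \<Rightarrow> bool" where
  "rel_prime a b \<longleftrightarrow> (\<forall>c. c dvd a \<longrightarrow> c dvd b \<longrightarrow> c dvd 1)"

definition nonzero_const :: "('v, 'a::zero) mpoly \<Rightarrow> bool" where
  "nonzero_const p \<longleftrightarrow> (\<exists>c. c \<noteq> 0 \<and> p = Const c)"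

text \<open>RIPS certificate C = C'/D, with C', D polynomials in x_0..x_{n-1} (Inl i) and
  placeholder variables y_0..y_{m-1} (Inr j) over the coefficient field 'b (= algebraic
  closure), certifying that G lies in the radical of the ideal generated by F_0..F_{m-1}
  in 'b[x_0..x_{n-1}].\<close>
definition RIPS_certificate ::
  "nat \<Rightarrow> nat \<Rightarrow> (nat \<Rightarrow> (nat, 'b::field) mpoly) \<Rightarrow> (nat, 'b) mpoly
     \<Rightarrow> (nat + nat, 'b) mpoly \<Rightarrow> (nat + nat, 'b) mpoly \<Rightarrow> bool" where
  "RIPS_certificate n m F G C' D \<longleftrightarrow>
     (let R = polys_in {..<n};
          \<sigma>F = (\<lambda>v. case v of Inl i \<Rightarrow> Var i | Inr j \<Rightarrow> F j);
          \<sigma>0 = (\<lambda>v. case v of Inl i \<Rightarrow> Var i | Inr j \<Rightarrow> 0)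
      in C' \<in> polys_in (Inl ` {..<n} \<union> Inr ` {..<m}) \<and>
         D \<in> polys_in (Inl ` {..<n} \<union> Inr ` {..<m}) \<and>
         D \<noteq> 0 \<and> rel_prime C' D \<and>
         \<comment> \<open>(0)\<close>
         (nonzero_const G \<longrightarrow> nonzero_const D) \<and>
         (\<not> nonzero_const G \<longrightarrow>
            (\<forall>P. minimal_prime_over R (ideal_gen R F m) P \<longrightarrow> subst \<sigma>F D \<notin> P)) \<and>
         \<comment> \<open>(1): C(x,0) is defined and equals 0\<close>
         subst \<sigma>0 D \<noteq> 0 \<and> subst \<sigma>0 C' = 0 \<and>
         \<comment> \<open>(2): C(x,F(x)) is defined and equals G\<close>
         subst \<sigma>F D \<noteq> 0 \<and> subst \<sigma>F C' = G * subst \<sigma>F D)"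

end

theory Submission imports Defs begin

definition subr :: "'r::comm_ring_1 set \<Rightarrow> bool" where
  "subr R \<longleftrightarrow> 0 \<in> R \<and> 1 \<in> R \<and> (\<forall>a\<in>R. \<forall>b\<in>R. a + b \<in> R \<and> a * b \<in> R) \<and> (\<forall>a\<in>R. -a \<in> R)"

lemma ideal_ext:
  assumes R: "subr R" and P: "is_ideal_in R P" and a: "a \<in> R"
  shows "is_ideal_in R {p + r * a | p r. p \<in> P \<and> r \<in> R}"
    "P \<subseteq> {p + r * a | p r. p \<in> P \<and> r \<in> R}"
    "a \<in> {p + r * a | p r. p \<in> P \<and> r \<in> R}"
proof -
  have PR: "P \<subseteq> R" using P unfolding is_ideal_in_def by auto
  show "is_ideal_in R {p + r * a | p r. p \<in> P \<and> r \<in> R}"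
    unfolding is_ideal_in_def
  proof (intro conjI ballI)
    show "{p + r * a |p r. p \<in> P \<and> r \<in> R} \<subseteq> R" using R PR a unfolding subr_def by blast
    show "0 \<in> {p + r * a |p r. p \<in> P \<and> r \<in> R}"
      using R P unfolding subr_def is_ideal_in_def by (auto intro!: exI[of _ 0])
  next
    fix x y assume "x \<in> {p + r * a |p r. p \<in> P \<and> r \<in> R}" "y \<in> {p + r * a |p r. p \<in> P \<and> r \<in> R}"
    then obtain p r q s where "x = p + r * a" "y = q + s * a" "p \<in> P" "r \<in> R" "q \<in> P" "s \<in> R" by auto
    moreover have "x + y = (p + q) + (r + s) * a" using \<open>x = p + r * a\<close> \<open>y = q + s * a\<close> by (simp add: algebra_simps)
    moreover have "p + q \<in> P" "r + s \<in> R" using R P \<open>p \<in> P\<close> \<open>q \<in> P\<close> \<open>r \<in> R\<close> \<open>s \<in> R\<close>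
      unfolding subr_def is_ideal_in_def by auto
    ultimately show "x + y \<in> {p + r * a |p r. p \<in> P \<and> r \<in> R}" by blast
  next
    fix t x assume t: "t \<in> R" and "x \<in> {p + r * a |p r. p \<in> P \<and> r \<in> R}"
    then obtain p r where "x = p + r * a" "p \<in> P" "r \<in> R" by auto
    moreover have "t * x = (t * p) + (t * r) * a" using \<open>x = p + r * a\<close> by (simp add: algebra_simps)
    moreover have "t * p \<in> P" "t * r \<in> R" using R P t \<open>p \<in> P\<close> \<open>r \<in> R\<close>
      unfolding subr_def is_ideal_in_def by auto
    ultimately show "t * x \<in> {p + r * a |p r. p \<in> P \<and> r \<in> R}" by blast
  qed
  show "P \<subseteq> {p + r * a | p r. p \<in> P \<and> r \<in> R}"
  proof
    fix x assume "x \<in> P"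
    moreover have "x = x + 0 * a" by simp
    moreover have "(0::'a) \<in> R" using R unfolding subr_def by auto
    ultimately show "x \<in> {p + r * a | p r. p \<in> P \<and> r \<in> R}" by blast
  qed
  have "a = 0 + 1 * a" by simp
  moreover have "(0::'a) \<in> P" "(1::'a) \<in> R" using R P unfolding subr_def is_ideal_in_def by auto
  ultimately show "a \<in> {p + r * a | p r. p \<in> P \<and> r \<in> R}" by blast
qed

lemma ideal_pow:
  assumes "is_ideal_in R P" "subr R" "x \<in> P" "y \<in> R"
  shows "x * y \<in> P" "y * x \<in> P"
  using assms unfolding is_ideal_in_def by (auto simp: mult.commute)

lemma radical_abstract:
  assumes R: "subr R" and I: "is_ideal_in R I" and g: "g \<in> R" and d: "d \<in> R"
    and gd: "g * d \<in> I" and min: "\<forall>P. minimal_prime_over R I P \<longrightarrow> d \<notin> P"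
  shows "\<exists>k. g ^ k \<in> I"
proof (rule ccontr)
  assume nk: "\<nexists>k. g ^ k \<in> I"
  have powR: "g ^ k \<in> R" for k
    by (induction k) (use R g in \<open>auto simp: subr_def\<close>)
  define AA where "AA = {J. is_ideal_in R J \<and> I \<subseteq> J \<and> (\<forall>k. g ^ k \<notin> J)}"
  have "\<exists>M\<in>AA. \<forall>Z\<in>AA. M \<subseteq> Z \<longrightarrow> Z = M"
  proof (rule subset_Zorn_nonempty)
    show "AA \<noteq> {}" using I nk unfolding AA_def by auto
  next
    fix CC assume ne: "CC \<noteq> {}" and ch: "subset.chain AA CC"
    have sub: "CC \<subseteq> AA" and tot: "\<And>U V. U \<in> CC \<Longrightarrow> V \<in> CC \<Longrightarrow> U \<subseteq> V \<or> V \<subseteq> U"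
      using ch unfolding subset_chain_def by auto
    show "\<Union>CC \<in> AA" unfolding AA_def
    proof (intro CollectI conjI allI)
      show "I \<subseteq> \<Union>CC" using ne sub unfolding AA_def by auto
      show "g ^ k \<notin> \<Union>CC" for k using sub unfolding AA_def by auto
      show "is_ideal_in R (\<Union>CC)" unfolding is_ideal_in_def
      proof (intro conjI ballI)
        show "\<Union>CC \<subseteq> R" using sub unfolding AA_def is_ideal_in_def by auto
        show "0 \<in> \<Union>CC" using ne sub unfolding AA_def is_ideal_in_def by auto
      next
        fix a b assume "a \<in> \<Union>CC" "b \<in> \<Union>CC"
        then obtain U V where XY: "U \<in> CC" "V \<in> CC" "a \<in> U" "b \<in> V" by auto
        from tot[OF XY(1,2)] show "a + b \<in> \<Union>CC"
        proof
          assume "U \<subseteq> V" then show ?thesis using XY sub unfolding AA_def is_ideal_in_def by blast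
        next
          assume "V \<subseteq> U" then show ?thesis using XY sub unfolding AA_def is_ideal_in_def by blast
        qed
      next
        fix r a assume "r \<in> R" "a \<in> \<Union>CC"
        then show "r * a \<in> \<Union>CC" using sub unfolding AA_def is_ideal_in_def by blast
      qed
    qed
  qed
  then obtain P where PA: "P \<in> AA" and Pmax: "\<forall>Z\<in>AA. P \<subseteq> Z \<longrightarrow> Z = P" by blast
  have Pid: "is_ideal_in R P" and IP: "I \<subseteq> P" and Pg: "\<And>k. g ^ k \<notin> P"
    using PA unfolding AA_def by auto
  have PR: "P \<subseteq> R" using Pid unfolding is_ideal_in_def by auto
  have ext: "\<exists>k. g ^ k \<in> {p + r * a | p r. p \<in> P \<and> r \<in> R}" if a: "a \<in> R" "a \<notin> P" for a
  proof (rule ccontr)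
    assume "\<nexists>k. g ^ k \<in> {p + r * a | p r. p \<in> P \<and> r \<in> R}"
    then have "{p + r * a | p r. p \<in> P \<and> r \<in> R} \<in> AA"
      using ideal_ext[OF R Pid a(1)] IP unfolding AA_def by auto
    with Pmax ideal_ext[OF R Pid a(1)] have "{p + r * a | p r. p \<in> P \<and> r \<in> R} = P" by blast
    with ideal_ext(3)[OF R Pid a(1)] a(2) show False by auto
  qed
  have Pprime: "prime_ideal_in R P" unfolding prime_ideal_in_def
  proof (intro conjI ballI impI Pid)
    show "1 \<notin> P" using Pg[of 0] by simp
  next
    fix a b assume a: "a \<in> R" and b: "b \<in> R" and ab: "a * b \<in> P"
    show "a \<in> P \<or> b \<in> P"
    proof (rule ccontr)
      assume "\<not> (a \<in> P \<or> b \<in> P)"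
      with ext a b obtain i j p r q s where
        e1: "g ^ i = p + r * a" "p \<in> P" "r \<in> R" and e2: "g ^ j = q + s * b" "q \<in> P" "s \<in> R"
        by blast
      have "g ^ (i + j) = p * (q + s * b) + (r * a) * q + (r * s) * (a * b)"
        using e1 e2 by (simp add: power_add algebra_simps)
      also have "\<dots> \<in> P"
      proof -
        have sR: "q + s * b \<in> R" using R PR e2 b unfolding subr_def by blast
        have raR: "r * a \<in> R" "r * s \<in> R" using R e1 e2 a unfolding subr_def by blast+
        have "p * (q + s * b) \<in> P" using ideal_pow(1)[OF Pid R e1(2) sR] .
        moreover have "(r * a) * q \<in> P" using ideal_pow(2)[OF Pid R e2(2) raR(1)] .
        moreover have "(r * s) * (a * b) \<in> P" using ideal_pow(2)[OF Pid R ab raR(2)] .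
        ultimately show ?thesis using Pid unfolding is_ideal_in_def by blast
      qed
      finally show False using Pg by blast
    qed
  qed
  \<comment> \<open>minimal prime below P\<close>
  define BB where "BB = uminus ` {Q. prime_ideal_in R Q \<and> I \<subseteq> Q \<and> Q \<subseteq> P}"
  have "\<exists>M\<in>BB. \<forall>Z\<in>BB. M \<subseteq> Z \<longrightarrow> Z = M"
  proof (rule subset_Zorn_nonempty)
    show "BB \<noteq> {}" using Pprime IP unfolding BB_def by auto
  next
    fix CC assume ne: "CC \<noteq> {}" and ch: "subset.chain BB CC"
    have sub: "CC \<subseteq> BB" and tot: "\<And>U V. U \<in> CC \<Longrightarrow> V \<in> CC \<Longrightarrow> U \<subseteq> V \<or> V \<subseteq> U"
      using ch unfolding subset_chain_def by auto
    define DD where "DD = uminus ` CC"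
    have D: "\<And>Q. Q \<in> DD \<Longrightarrow> prime_ideal_in R Q \<and> I \<subseteq> Q \<and> Q \<subseteq> P"
      using sub unfolding DD_def BB_def by auto
    have Dne: "DD \<noteq> {}" using ne unfolding DD_def by auto
    have Dtot: "\<And>U V. U \<in> DD \<Longrightarrow> V \<in> DD \<Longrightarrow> U \<subseteq> V \<or> V \<subseteq> U"
      using tot unfolding DD_def by auto
    have eq: "\<Union>CC = - \<Inter>DD" unfolding DD_def by auto
    have Did: "\<And>Q. Q \<in> DD \<Longrightarrow> is_ideal_in R Q" and Dpr: "\<And>Q. Q \<in> DD \<Longrightarrow> prime_ideal_in R Q"
      and DI: "\<And>Q. Q \<in> DD \<Longrightarrow> I \<subseteq> Q" and DP: "\<And>Q. Q \<in> DD \<Longrightarrow> Q \<subseteq> P"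
      using D unfolding prime_ideal_in_def by auto
    have "prime_ideal_in R (\<Inter>DD) \<and> I \<subseteq> \<Inter>DD \<and> \<Inter>DD \<subseteq> P"
    proof (intro conjI)
      show "I \<subseteq> \<Inter>DD" using DI by blast
      show "\<Inter>DD \<subseteq> P" using DP Dne by blast
      show "prime_ideal_in R (\<Inter>DD)" unfolding prime_ideal_in_def is_ideal_in_def
      proof (intro conjI ballI impI)
        obtain Q0 where Q0: "Q0 \<in> DD" using Dne by auto
        have "Q0 \<subseteq> R" using Did[OF Q0] unfolding is_ideal_in_def by simp
        then show "\<Inter>DD \<subseteq> R" using Q0 by auto
        have "1 \<notin> Q0" using Dpr[OF Q0] unfolding prime_ideal_in_def by simp
        then show "1 \<notin> \<Inter>DD" using Q0 by auto
        show "0 \<in> \<Inter>DD"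
        proof
          fix Q assume "Q \<in> DD" then show "0 \<in> Q" using Did unfolding is_ideal_in_def by simp
        qed
      next
        fix a b assume ab: "a \<in> \<Inter>DD" "b \<in> \<Inter>DD"
        show "a + b \<in> \<Inter>DD"
        proof
          fix Q assume Q: "Q \<in> DD"
          then have "a \<in> Q" "b \<in> Q" using ab by auto
          then show "a + b \<in> Q" using Did[OF Q] unfolding is_ideal_in_def by simp
        qed
      next
        fix r a assume ra: "r \<in> R" "a \<in> \<Inter>DD"
        show "r * a \<in> \<Inter>DD"
        proof
          fix Q assume Q: "Q \<in> DD"
          then have "a \<in> Q" using ra by auto
          then show "r * a \<in> Q" using Did[OF Q] ra(1) unfolding is_ideal_in_def by simp
        qed
      next
        fix a b assume a: "a \<in> R" and b: "b \<in> R" and ab: "a * b \<in> \<Inter>DD"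
        show "a \<in> \<Inter>DD \<or> b \<in> \<Inter>DD"
        proof (rule ccontr)
          assume "\<not> (a \<in> \<Inter>DD \<or> b \<in> \<Inter>DD)"
          then obtain U V where XY: "U \<in> DD" "V \<in> DD" "a \<notin> U" "b \<notin> V" by auto
          have "a * b \<in> U" "a * b \<in> V" using ab XY by auto
          then have pX: "a \<in> U \<or> b \<in> U" and pY: "a \<in> V \<or> b \<in> V"
            using Dpr[OF XY(1)] Dpr[OF XY(2)] a b unfolding prime_ideal_in_def by simp_all
          from Dtot[OF XY(1,2)] show False
            using pX pY XY by blast
        qed
      qed
    qed
    then show "\<Union>CC \<in> BB" unfolding eq BB_def by auto
  qed
  then obtain M where MB: "M \<in> BB" and Mmax: "\<forall>Z\<in>BB. M \<subseteq> Z \<longrightarrow> Z = M" by blast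
  define Q where "Q = - M"
  have Q: "prime_ideal_in R Q" "I \<subseteq> Q" "Q \<subseteq> P" using MB unfolding Q_def BB_def by auto
  have "minimal_prime_over R I Q" unfolding minimal_prime_over_def
  proof (intro conjI allI impI Q(1,2))
    fix Q' assume H: "prime_ideal_in R Q' \<and> I \<subseteq> Q' \<and> Q' \<subseteq> Q"
    then have "- Q' \<in> BB" using Q unfolding BB_def by auto
    moreover have "M \<subseteq> - Q'" using H unfolding Q_def by auto
    ultimately have "- Q' = M" using Mmax by blast
    then show "Q' = Q" unfolding Q_def by auto
  qed
  with min have dQ: "d \<notin> Q" by blast
  have gQ: "g \<notin> Q" using Q(3) Pg[of 1] by auto
  have "g * d \<in> Q" using gd Q(2) by blast
  then show False using Q(1) g d dQ gQ unfolding prime_ideal_in_def by blast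
qed


lemma subr_sum: "subr R \<Longrightarrow> (\<And>x. x \<in> S \<Longrightarrow> f x \<in> R) \<Longrightarrow> sum f S \<in> R"
  by (induction S rule: infinite_finite_induct) (auto simp: subr_def)

lemma subr_prod: "subr R \<Longrightarrow> (\<And>x. x \<in> S \<Longrightarrow> f x \<in> R) \<Longrightarrow> prod f S \<in> R"
  by (induction S rule: infinite_finite_induct) (auto simp: subr_def)

lemma subr_pow: "subr R \<Longrightarrow> x \<in> R \<Longrightarrow> x ^ k \<in> R"
  by (induction k) (auto simp: subr_def)

lemma keys_nat_add: "Poly_Mapping.keys ((a::'v \<Rightarrow>\<^sub>0 nat) + b) \<subseteq> Poly_Mapping.keys a \<union> Poly_Mapping.keys b"
  by (rule keys_add)

lemma vars_add: "vars (p + q) \<subseteq> vars p \<union> vars q"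
  unfolding vars_def using keys_add[of p q] by blast

lemma vars_mult: "vars ((p::('v,'a::comm_ring_1) mpoly) * q) \<subseteq> vars p \<union> vars q"
proof
  fix v assume "v \<in> vars (p * q)"
  then obtain mon where "mon \<in> Poly_Mapping.keys (p * q)" "v \<in> Poly_Mapping.keys mon"
    unfolding vars_def by auto
  then obtain a b where "mon = a + b" "a \<in> Poly_Mapping.keys p" "b \<in> Poly_Mapping.keys q"
    using keys_mult[of p q] by blast
  with \<open>v \<in> Poly_Mapping.keys mon\<close> keys_add[of a b] show "v \<in> vars p \<union> vars q"
    unfolding vars_def by blast
qed

lemma vars_uminus: "vars (- (p::('v,'a::comm_ring_1) mpoly)) = vars p"
  unfolding vars_def by simp

lemma vars_Const: "vars (Const c) = {}"
  unfolding vars_def Const_def by auto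

lemma vars_one: "vars (1::('v,'a::comm_ring_1) mpoly) = {}"
  unfolding vars_def by simp

lemma subr_polys_in: "subr (polys_in V :: ('v,'a::comm_ring_1) mpoly set)"
  unfolding subr_def polys_in_def
proof (intro conjI ballI CollectI)
  show "vars (0::('v,'a) mpoly) \<subseteq> V" by (simp add: vars_def)
  show "vars (1::('v,'a) mpoly) \<subseteq> V" by (simp add: vars_one)
next
  fix a b :: "('v,'a) mpoly" assume "a \<in> {p. vars p \<subseteq> V}" "b \<in> {p. vars p \<subseteq> V}"
  then show "vars (a + b) \<subseteq> V" "vars (a * b) \<subseteq> V"
    using vars_add[of a b] vars_mult[of a b] by auto
next
  fix a :: "('v,'a) mpoly" assume "a \<in> {p. vars p \<subseteq> V}"
  then show "vars (- a) \<subseteq> V" by (simp add: vars_uminus)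
qed

lemma Const_in: "Const c \<in> polys_in V"
  unfolding polys_in_def by (simp add: vars_Const)

lemma subst_in:
  assumes R: "subr R" and C: "\<And>c. Const c \<in> R" and s: "\<And>v. v \<in> vars p \<Longrightarrow> \<sigma> v \<in> R"
  shows "subst \<sigma> p \<in> R"
  unfolding subst_def
proof (rule subr_sum[OF R])
  fix mon assume mon: "mon \<in> Poly_Mapping.keys p"
  have "(\<Prod>v\<in>Poly_Mapping.keys mon. \<sigma> v ^ Poly_Mapping.lookup mon v) \<in> R"
    by (rule subr_prod[OF R], rule subr_pow[OF R], rule s) (use mon in \<open>auto simp: vars_def\<close>)
  then show "Const (Poly_Mapping.lookup p mon) * (\<Prod>v\<in>Poly_Mapping.keys mon. \<sigma> v ^ Poly_Mapping.lookup mon v) \<in> R"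
    using R C unfolding subr_def by blast
qed

lemma map_coeffs_in:
  assumes "p \<in> polys_in V" "f 0 = 0"
  shows "map_coeffs f p \<in> polys_in V"
proof -
  have "Poly_Mapping.keys (map_coeffs f p) \<subseteq> Poly_Mapping.keys p"
    unfolding map_coeffs_def by (auto simp: in_keys_iff map.rep_eq when_def)
  then show ?thesis using assms unfolding polys_in_def vars_def by auto
qed

lemma ideal_gen_ideal:
  assumes R: "subr R" and F: "\<And>i. i < m \<Longrightarrow> Fs i \<in> R"
  shows "is_ideal_in R (ideal_gen R Fs m)"
  unfolding is_ideal_in_def ideal_gen_def
proof (intro conjI ballI)
  show "{\<Sum>i<m. h i * Fs i |h. \<forall>i<m. h i \<in> R} \<subseteq> R"
    using R F by (auto intro!: subr_sum simp: subr_def)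
  show "0 \<in> {\<Sum>i<m. h i * Fs i |h. \<forall>i<m. h i \<in> R}"
    apply (rule CollectI, rule exI[where x="\<lambda>_. 0"])
    using R by (simp add: subr_def)
next
  fix a b assume "a \<in> {\<Sum>i<m. h i * Fs i |h. \<forall>i<m. h i \<in> R}" "b \<in> {\<Sum>i<m. h i * Fs i |h. \<forall>i<m. h i \<in> R}"
  then obtain h k where hk: "a = (\<Sum>i<m. h i * Fs i)" "b = (\<Sum>i<m. k i * Fs i)" "\<forall>i<m. h i \<in> R" "\<forall>i<m. k i \<in> R"
    by auto
  have "a + b = (\<Sum>i<m. (\<lambda>i. h i + k i) i * Fs i)" unfolding hk by (simp add: sum.distrib algebra_simps)
  moreover have "\<forall>i<m. (\<lambda>i. h i + k i) i \<in> R" using hk R by (simp add: subr_def)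
  ultimately show "a + b \<in> {\<Sum>i<m. h i * Fs i |h. \<forall>i<m. h i \<in> R}"
    apply - apply (rule CollectI, rule exI[where x="\<lambda>i. h i + k i"]) by blast
next
  fix r a assume r: "r \<in> R" and "a \<in> {\<Sum>i<m. h i * Fs i |h. \<forall>i<m. h i \<in> R}"
  then obtain h where hk: "a = (\<Sum>i<m. h i * Fs i)" "\<forall>i<m. h i \<in> R" by auto
  have "r * a = (\<Sum>i<m. (\<lambda>i. r * h i) i * Fs i)" unfolding hk by (simp add: sum_distrib_left algebra_simps)
  moreover have "\<forall>i<m. (\<lambda>i. r * h i) i \<in> R" using hk R r by (simp add: subr_def)
  ultimately show "r * a \<in> {\<Sum>i<m. h i * Fs i |h. \<forall>i<m. h i \<in> R}"
    apply - apply (rule CollectI, rule exI[where x="\<lambda>i. r * h i"]) by blast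
qed

lemma ideal_gen_gen:
  assumes R: "subr R" and j: "j < m" and r: "r \<in> R"
  shows "Fs j * r \<in> ideal_gen R Fs m"
proof -
  have "Fs j * r = (\<Sum>i<m. (\<lambda>i. if i = j then r else 0) i * Fs i)"
  proof -
    have "(\<Sum>i<m. (\<lambda>i. if i = j then r else 0) i * Fs i) = (\<Sum>i<m. if i = j then r * Fs i else 0)"
      by (rule sum.cong) auto
    also have "\<dots> = r * Fs j" using j by simp
    finally show ?thesis by (simp add: mult.commute)
  qed
  moreover have "\<forall>i<m. (\<lambda>i. if i = j then r else 0) i \<in> R" using R r by (simp add: subr_def)
  ultimately show ?thesis unfolding ideal_gen_def
    apply - apply (rule CollectI, rule exI[where x="\<lambda>i. if i = j then r else 0"])
    by blast
qed

lemma ideal_sum: "is_ideal_in R I \<Longrightarrow> (\<And>x. x \<in> S \<Longrightarrow> f x \<in> I) \<Longrightarrow> sum f S \<in> I"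
  by (induction S rule: infinite_finite_induct) (auto simp: is_ideal_in_def)


lemma Var_in: "i \<in> V \<Longrightarrow> (Var i :: ('v,'a::comm_ring_1) mpoly) \<in> polys_in V"
  unfolding polys_in_def vars_def Var_def by auto

lemma subst_ideal:
  fixes C :: "(nat + nat, 'a::comm_ring_1) mpoly" and Fs :: "nat \<Rightarrow> (nat, 'a) mpoly"
  assumes R: "subr R" and VR: "\<And>i. i < n \<Longrightarrow> Var i \<in> R" and CR: "\<And>c. Const c \<in> R"
    and FR: "\<And>i. i < m \<Longrightarrow> Fs i \<in> R"
    and C: "C \<in> polys_in (Inl ` {..<n} \<union> Inr ` {..<m})"
    and z: "subst (\<lambda>v. case v of Inl i \<Rightarrow> Var i | Inr j \<Rightarrow> 0) C = 0"
  shows "subst (\<lambda>v. case v of Inl i \<Rightarrow> Var i | Inr j \<Rightarrow> Fs j) C \<in> ideal_gen R Fs m"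
proof -
  define sF where "sF = (\<lambda>v. case v of Inl i \<Rightarrow> Var i | Inr j \<Rightarrow> Fs j)"
  define s0 where "s0 = (\<lambda>v::nat+nat. case v of Inl i \<Rightarrow> Var i | Inr j \<Rightarrow> (0::(nat,'a) mpoly))"
  define t where "t = (\<lambda>(\<sigma>::nat+nat \<Rightarrow> (nat,'a) mpoly) mon. Const (Poly_Mapping.lookup C mon) * (\<Prod>v\<in>Poly_Mapping.keys mon. \<sigma> v ^ Poly_Mapping.lookup mon v))"
  have I: "is_ideal_in R (ideal_gen R Fs m)" by (rule ideal_gen_ideal[OF R FR])
  have "subst sF C = subst sF C - subst s0 C" using z unfolding s0_def by simp
  also have "\<dots> = (\<Sum>mon\<in>Poly_Mapping.keys C. t sF mon - t s0 mon)"
    unfolding subst_def t_def by (simp add: sum_subtractf)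
  also have "\<dots> \<in> ideal_gen R Fs m"
  proof (rule ideal_sum[OF I])
    fix mon assume mon: "mon \<in> Poly_Mapping.keys C"
    have vC: "v \<in> Poly_Mapping.keys mon \<Longrightarrow> v \<in> Inl ` {..<n} \<union> Inr ` {..<m}" for v
      using C mon unfolding polys_in_def vars_def by auto
    have sFR: "v \<in> Poly_Mapping.keys mon \<Longrightarrow> sF v \<in> R" for v
      using vC[of v] VR FR unfolding sF_def by auto
    show "t sF mon - t s0 mon \<in> ideal_gen R Fs m"
    proof (cases "\<exists>j. Inr j \<in> Poly_Mapping.keys mon")
      case True
      then obtain j where j: "Inr j \<in> Poly_Mapping.keys mon" by auto
      have jm: "j < m" using vC[OF j] by auto
      define k where "k = Poly_Mapping.lookup mon (Inr j)"
      have k0: "k \<noteq> 0" using j unfolding k_def by (simp add: in_keys_iff)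
      have "t s0 mon = 0"
        unfolding t_def
        by (subst prod_zero) (use j k0 in \<open>auto simp: s0_def k_def zero_power intro!: bexI[where x="Inr j"]\<close>)
      moreover have "t sF mon = Fs j * (Const (Poly_Mapping.lookup C mon) * Fs j ^ (k - 1) *
          (\<Prod>v\<in>Poly_Mapping.keys mon - {Inr j}. sF v ^ Poly_Mapping.lookup mon v))"
      proof -
        have "(\<Prod>v\<in>Poly_Mapping.keys mon. sF v ^ Poly_Mapping.lookup mon v)
            = sF (Inr j) ^ k * (\<Prod>v\<in>Poly_Mapping.keys mon - {Inr j}. sF v ^ Poly_Mapping.lookup mon v)"
          unfolding k_def by (rule prod.remove) (use j in auto)
        moreover have "sF (Inr j) ^ k = Fs j * Fs j ^ (k - 1)"
          using k0 unfolding sF_def by (cases k) auto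
        ultimately show ?thesis unfolding t_def by (simp add: algebra_simps)
      qed
      moreover have "Const (Poly_Mapping.lookup C mon) * Fs j ^ (k - 1) *
          (\<Prod>v\<in>Poly_Mapping.keys mon - {Inr j}. sF v ^ Poly_Mapping.lookup mon v) \<in> R"
      proof -
        have "(\<Prod>v\<in>Poly_Mapping.keys mon - {Inr j}. sF v ^ Poly_Mapping.lookup mon v) \<in> R"
          by (rule subr_prod[OF R], rule subr_pow[OF R], rule sFR) auto
        moreover have "Fs j ^ (k - 1) \<in> R" by (rule subr_pow[OF R FR[OF jm]])
        ultimately show ?thesis using R CR unfolding subr_def by blast
      qed
      ultimately show ?thesis using ideal_gen_gen[OF R jm] by simp
    next
      case False
      have "t sF mon = t s0 mon" unfolding t_def
      proof (rule arg_cong[where f="\<lambda>x. _ * x"], rule prod.cong[OF refl])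
        fix v assume "v \<in> Poly_Mapping.keys mon"
        with False show "sF v ^ Poly_Mapping.lookup mon v = s0 v ^ Poly_Mapping.lookup mon v"
          unfolding sF_def s0_def by (cases v) auto
      qed
      then show ?thesis using I unfolding is_ideal_in_def by simp
    qed
  qed
  finally show ?thesis unfolding sF_def .
qed


lemma subst_Const: "subst \<sigma> (Const c) = Const c"
  unfolding subst_def Const_def by (cases "c = 0") simp_all

theorem propositionB3:
  fixes n m :: nat
    and F :: "nat \<Rightarrow> (nat, 'a::field) mpoly"
    and G :: "(nat, 'a) mpoly"
  assumes "G \<in> polys_in {..<n}"
    and "\<forall>i<m. F i \<in> polys_in {..<n}"
    and "\<exists>C' D. RIPS_certificate n m (\<lambda>i. map_coeffs to_ac (F i)) (map_coeffs to_ac G) C' D"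
  shows "in_radical (polys_in {..<n}) (\<lambda>i. map_coeffs to_ac (F i)) m (map_coeffs to_ac G)"
proof -
  define R where "R = (polys_in {..<n} :: (nat, 'a alg_closure) mpoly set)"
  define Fs where "Fs = (\<lambda>i. map_coeffs to_ac (F i))"
  define g where "g = map_coeffs to_ac G"
  define sF where "sF = (\<lambda>v. case v of Inl i \<Rightarrow> Var i | Inr j \<Rightarrow> Fs j)"
  define s0 where "s0 = (\<lambda>v::nat+nat. case v of Inl i \<Rightarrow> Var i | Inr j \<Rightarrow> (0::(nat,'a alg_closure) mpoly))"
  obtain C' D where cert: "RIPS_certificate n m Fs g C' D" using assms(3) unfolding Fs_def g_def by blast
  have R: "subr R" unfolding R_def by (rule subr_polys_in)
  have CR: "\<And>c. Const c \<in> R" unfolding R_def by (rule Const_in)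
  have VR: "\<And>i. i < n \<Longrightarrow> Var i \<in> R" unfolding R_def by (rule Var_in) simp
  have FR: "\<And>i. i < m \<Longrightarrow> Fs i \<in> R" unfolding R_def Fs_def
    using assms(2) by (auto intro!: map_coeffs_in)
  have gR: "g \<in> R" unfolding R_def g_def using assms(1) by (auto intro!: map_coeffs_in)
  have C'in: "C' \<in> polys_in (Inl ` {..<n} \<union> Inr ` {..<m})"
    and Din: "D \<in> polys_in (Inl ` {..<n} \<union> Inr ` {..<m})"
    and c0: "nonzero_const g \<longrightarrow> nonzero_const D"
    and c1: "\<not> nonzero_const g \<longrightarrow> (\<forall>P. minimal_prime_over R (ideal_gen R Fs m) P \<longrightarrow> subst sF D \<notin> P)"
    and z: "subst s0 C' = 0"
    and eq: "subst sF C' = g * subst sF D"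
    using cert unfolding RIPS_certificate_def Let_def R_def sF_def s0_def by auto
  have I: "is_ideal_in R (ideal_gen R Fs m)" by (rule ideal_gen_ideal[OF R FR])
  have "subst sF C' \<in> ideal_gen R Fs m"
    unfolding sF_def by (rule subst_ideal[OF R VR CR FR C'in]) (use z in \<open>unfold s0_def\<close>)
  then have gd: "g * subst sF D \<in> ideal_gen R Fs m" using eq by simp
  have dR: "subst sF D \<in> R"
  proof (rule subst_in[OF R CR])
    fix v assume "v \<in> vars D"
    then have "v \<in> Inl ` {..<n} \<union> Inr ` {..<m}" using Din unfolding polys_in_def by auto
    then show "sF v \<in> R" using VR FR unfolding sF_def by auto
  qed
  have min: "\<forall>P. minimal_prime_over R (ideal_gen R Fs m) P \<longrightarrow> subst sF D \<notin> P"
  proof (cases "nonzero_const g")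
    case False then show ?thesis using c1 by blast
  next
    case True
    then obtain c where c: "c \<noteq> 0" "D = Const c" using c0 unfolding nonzero_const_def by auto
    show ?thesis
    proof (intro allI impI notI)
      fix P assume P: "minimal_prime_over R (ideal_gen R Fs m) P" and dP: "subst sF D \<in> P"
      have Pp: "prime_ideal_in R P" using P unfolding minimal_prime_over_def by auto
      have "Const (inverse c) * subst sF D \<in> P"
        using Pp dP CR unfolding prime_ideal_in_def is_ideal_in_def by blast
      moreover have "Const (inverse c) * subst sF D = 1"
        using c by (simp add: subst_Const) (simp add: Const_def mult_single)
      ultimately show False using Pp unfolding prime_ideal_in_def by simp
    qed
  qed
  have "\<exists>k. g ^ k \<in> ideal_gen R Fs m"
    by (rule radical_abstract[OF R I gR dR gd min])
  then show ?thesis unfolding in_radical_def R_def Fs_def g_def by simp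
qed

end
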